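(* Let $H=(V,E)$ be a path hypergraph with exactly three edges $e_1,e_2,e_3$ (in path order), where the middle edge satisfies $|e_2|=2$ and $|V|\equiv 0\pmod 4$. Then $H$ is not $\mathbb{Z}_2\times\mathbb{Z}_2$-cordial.
   Context: A path hypergraph with edges $e_1,\dots,e_m$ (in this order) is a finite hypergraph $H=(V,E)$ with $E=\{e_1,\dots,e_m\}$, each edge having at least two vertices, $V=e_1\cup\cdots\cup e_m$, $|e_i\cap e_{i+1}|=1$ for $1\le i<m$, and $e_i\cap e_j=\emptyset$ whenever $|i-j|\ge 2$. Let $A=\mathbb{Z}_2\times\mathbb{Z}_2$. For a labeling $c:V\to A$, write $v_c(a)=|c^{-1}(a)|$; $c$ is $A$-friendly if $|v_c(a)-v_c(b)|\le 1$ for all $a,b\in A$. It induces $c^*:E\to A$, $c^*(e)=\sum_{v\in e}c(v)$; write $e_{c^*}(a)=|(c^* )^{-1}(a)|$. $H$ is $A$-cordial if it admits an $A$-friendly labeling $c$ with $|e_{c^*}(a)-e_{c^*}(b)|\le 1$ for all $a,b\in A$. *)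

theory Defs
  imports Main "HOL-Library.Z2" "HOL-Library.Product_Plus"
begin

type_synonym A = "bit \<times> bit"

definition path_hypergraph :: "'v set \<Rightarrow> 'v set list \<Rightarrow> bool" where
  "path_hypergraph V es \<longleftrightarrow>
     es \<noteq> [] \<and>
     (\<forall>e\<in>set es. finite e \<and> card e \<ge> 2) \<and>
     V = \<Union>(set es) \<and>
     (\<forall>i. Suc i < length es \<longrightarrow> card (es ! i \<inter> es ! Suc i) = 1) \<and>
     (\<forall>i j. i < length es \<and> j < length es \<and> i + 2 \<le> j \<longrightarrow> es ! i \<inter> es ! j = {})"

definition vcount :: "'v set \<Rightarrow> ('v \<Rightarrow> A) \<Rightarrow> A \<Rightarrow> nat" where
  "vcount V c a = card {v \<in> V. c v = a}"

definition A_friendly :: "'v set \<Rightarrow> ('v \<Rightarrow> A) \<Rightarrow> bool" where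
  "A_friendly V c \<longleftrightarrow>
     (\<forall>a b. \<bar>int (vcount V c a) - int (vcount V c b)\<bar> \<le> 1)"

definition induced :: "('v \<Rightarrow> A) \<Rightarrow> 'v set \<Rightarrow> A" where
  "induced c e = (\<Sum>v\<in>e. c v)"

definition ecount :: "'v set list \<Rightarrow> ('v \<Rightarrow> A) \<Rightarrow> A \<Rightarrow> nat" where
  "ecount es c a = card {e \<in> set es. induced c e = a}"

definition A_cordial :: "'v set \<Rightarrow> 'v set list \<Rightarrow> bool" where
  "A_cordial V es \<longleftrightarrow>
     (\<exists>c. A_friendly V c \<and>
          (\<forall>a b. \<bar>int (ecount es c a) - int (ecount es c b)\<bar> \<le> 1))"

end

theory Submission
  imports Defs
begin

definition Lab :: "A set" where "Lab = {(0,0),(0,1),(1,0),(1,1)}"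
lemma bit_cases': "(b::bit) = 0 \<or> b = 1" by (cases b) auto
lemma in_Lab: "x \<in> Lab"
  unfolding Lab_def using bit_cases'[of "fst x"] bit_cases'[of "snd x"] by (cases x) auto
lemma Lab_sum: "(\<Sum>y\<in>Lab. y) = 0"
  unfolding Lab_def apply (subst sum.insert, simp, simp)+
  apply (simp add: zero_prod_def)
  done
lemma Lab_sum_count: "(\<Sum>y\<in>Lab. f y) = f (0,0) + f (0,1) + f (1,0) + (f (1,1)::nat)"
  unfolding Lab_def apply (subst sum.insert, simp, simp)+ by simp
lemma A_self: "(a::A) + a = 0"
  by (cases a) (simp add: zero_prod_def)
lemma A_eq: "(a::A) + b = 0 \<Longrightarrow> a = b"
  by (metis A_self add.assoc add.commute add_0)
lemma sum_const_card: "finite F \<Longrightarrow> (\<Sum>_\<in>F. (y::A)) = (\<Sum>i<card F. y)"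
  by (induction F rule: finite_induct) (auto simp: add.commute)
lemma ar: fixes a b c d k :: int
  assumes "a - b \<le> 1" "b - a \<le> 1" "a - c \<le> 1" "c - a \<le> 1" "a - d \<le> 1" "d - a \<le> 1"
   "b - c \<le> 1" "c - b \<le> 1" "b - d \<le> 1" "d - b \<le> 1" "c - d \<le> 1" "d - c \<le> 1"
   "a + b + c + d = 4 * k"
  shows "b = a"
proof -
  have "\<not> k \<ge> a + 1" using assms by linarith
  moreover have "\<not> k \<le> a - 1" using assms by linarith
  ultimately have "k = a" by linarith
  hence s: "b + c + d = 3 * a" using assms by linarith
  have "\<not> b \<ge> a + 1" using assms s by linarith
  moreover have "\<not> b \<le> a - 1" using assms s by linarith
  ultimately show ?thesis by linarith
qed

lemma ar3: fixes a b c d k :: int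
  assumes "a - b \<le> 1" "b - a \<le> 1" "a - c \<le> 1" "c - a \<le> 1" "a - d \<le> 1" "d - a \<le> 1"
   "b - c \<le> 1" "c - b \<le> 1" "b - d \<le> 1" "d - b \<le> 1" "c - d \<le> 1" "d - c \<le> 1"
   "a + b + c + d = 4 * k"
  shows "b = a \<and> c = a \<and> d = a"
proof -
  have "b = a" by (rule ar[of a b c d k]) (use assms in linarith)+
  moreover have "c = a" by (rule ar[of a c b d k]) (use assms in linarith)+
  moreover have "d = a" by (rule ar[of a d c b k]) (use assms in linarith)+
  ultimately show ?thesis by simp
qed

lemma four_eq:
  assumes "\<forall>a b. \<bar>int (f a) - int (f b)\<bar> \<le> 1"
    and "(f (0,0) + f (0,1) + f (1,0) + f (1,1)) mod 4 = 0"
  shows "f a = f ((0,0)::A)"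
proof -
  have h: "int (f x) - int (f y) \<le> 1" for x y using assms(1) by (meson abs_le_D1)
  obtain k where k: "f (0,0) + f (0,1) + f (1,0) + f (1,1) = 4 * k" using assms(2) by auto
  hence k': "int (f (0,0)) + int (f (0,1)) + int (f (1,0)) + int (f (1,1)) = 4 * int k" by linarith
  have "a = (0,0) \<or> a = (0,1) \<or> a = (1,0) \<or> a = (1,1)" using in_Lab[of a] unfolding Lab_def by auto
  moreover have "int (f (0,1)) = int (f ((0,0)::A)) \<and> int (f (1,0)) = int (f ((0,0)::A)) \<and> int (f (1,1)) = int (f ((0,0)::A))"
    by (rule ar3[OF h h h h h h h h h h h h k'])
  ultimately show ?thesis by auto
qed

theorem proposition7:
  fixes V :: "'v set" and e1 e2 e3 :: "'v set"
  assumes "path_hypergraph V [e1, e2, e3]"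
    and "card e2 = 2"
    and "card V mod 4 = 0"
  shows "\<not> A_cordial V [e1, e2, e3]"
proof
  assume "A_cordial V [e1, e2, e3]"
  then obtain c where fr: "A_friendly V c"
    and ec: "\<forall>a b. \<bar>int (ecount [e1,e2,e3] c a) - int (ecount [e1,e2,e3] c b)\<bar> \<le> 1"
    unfolding A_cordial_def by blast
  note P = assms(1)[unfolded path_hypergraph_def]
  have f1: "finite e1" and f2: "finite e2" and f3: "finite e3" and c1: "card e1 \<ge> 2"
    and V: "V = e1 \<union> e2 \<union> e3"
    using P by auto
  have i12: "card (e1 \<inter> e2) = 1" using P[THEN conjunct2, THEN conjunct2, THEN conjunct2, THEN conjunct1, rule_format, of 0] by simp
  have i23: "card (e2 \<inter> e3) = 1" using P[THEN conjunct2, THEN conjunct2, THEN conjunct2, THEN conjunct1, rule_format, of 1] by simp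
  have d13: "e1 \<inter> e3 = {}" using P[THEN conjunct2, THEN conjunct2, THEN conjunct2, THEN conjunct2, rule_format, of 0 2] by simp
  obtain x where x: "e1 \<inter> e2 = {x}" using i12 card_1_singletonE by blast
  obtain y where y: "e2 \<inter> e3 = {y}" using i23 card_1_singletonE by blast
  have "x \<noteq> y" using x y d13 by blast
  hence "{x,y} \<subseteq> e2" "card {x,y} = 2" using x y by auto
  hence "e2 = {x,y}" using assms(2) f2 by (metis card_subset_eq)
  hence V2: "V = e1 \<union> e3" using V x y by auto
  have finV: "finite V" using V f1 f2 f3 by simp
  let ?s = "\<lambda>e. induced c e"
  have sV: "(\<Sum>v\<in>V. c v) = ?s e1 + ?s e3"
    unfolding V2 induced_def using sum.union_disjoint[OF f1 f3 d13] by simp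
  have cardV: "card V = (\<Sum>y\<in>Lab. vcount V c y)"
  proof -
    have "card V = (\<Sum>v\<in>V. 1)" by simp
    also have "\<dots> = (\<Sum>y\<in>Lab. \<Sum>v\<in>{v\<in>V. c v = y}. 1)"
      by (rule sum.group[symmetric]) (simp add: finV, simp add: Lab_def, use in_Lab in blast)
    finally show ?thesis unfolding vcount_def by simp
  qed
  have eq: "vcount V c a = vcount V c (0,0)" for a
    apply (rule four_eq[where f="vcount V c"])
    using fr unfolding A_friendly_def apply blast
    using assms(3) by (simp add: cardV Lab_sum_count)
  have "(\<Sum>v\<in>V. c v) = (\<Sum>y\<in>Lab. \<Sum>v\<in>{v\<in>V. c v = y}. c v)"
    by (rule sum.group[symmetric]) (simp add: finV, simp add: Lab_def, use in_Lab in blast)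
  also have "\<dots> = (\<Sum>y\<in>Lab. \<Sum>v\<in>{v\<in>V. c v = y}. y)"
    by (rule sum.cong[OF refl], rule sum.cong[OF refl]) simp
  also have "\<dots> = (\<Sum>y\<in>Lab. \<Sum>i<vcount V c (0,0). y)"
  proof (rule sum.cong[OF refl])
    fix y assume "y \<in> Lab"
    have "finite {v\<in>V. c v = y}" using finV by simp
    hence "(\<Sum>v\<in>{v\<in>V. c v = y}. y) = (\<Sum>i<card {v\<in>V. c v = y}. y)" by (rule sum_const_card)
    also have "card {v\<in>V. c v = y} = vcount V c (0,0)" using eq[of y] unfolding vcount_def by simp
    finally show "(\<Sum>v\<in>{v\<in>V. c v = y}. y) = (\<Sum>i<vcount V c (0,0). y)" .
  qed
  also have "\<dots> = (\<Sum>i<vcount V c (0,0). \<Sum>y\<in>Lab. y)"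
    by (rule sum.swap)
  also have "\<dots> = 0" using Lab_sum by simp
  finally have "?s e1 = ?s e3" using sV A_eq by simp
  have ne13: "e1 \<noteq> e3" using d13 c1 by auto
  obtain b where b: "b \<noteq> ?s e1" "b \<noteq> ?s e2"
  proof -
    have "card (Lab - {?s e1, ?s e2}) \<ge> 2"
    proof -
      have "card Lab = 4" unfolding Lab_def by (simp add: zero_prod_def)
      moreover have "card {?s e1, ?s e2} \<le> 2" by (simp add: card_insert_if)
      moreover have "card (Lab - {?s e1, ?s e2}) \<ge> card Lab - card {?s e1, ?s e2}"
        by (rule diff_card_le_card_Diff) simp
      ultimately show ?thesis by linarith
    qed
    hence "Lab - {?s e1, ?s e2} \<noteq> {}" by (intro notI) simp
    then obtain b where "b \<in> Lab - {?s e1, ?s e2}" by blast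
    thus ?thesis using that by blast
  qed
  have "ecount [e1,e2,e3] c b = 0"
    unfolding ecount_def using b \<open>?s e1 = ?s e3\<close> by auto
  moreover have "ecount [e1,e2,e3] c (?s e1) \<ge> 2"
  proof -
    have "{e1,e3} \<subseteq> {e \<in> set [e1,e2,e3]. induced c e = ?s e1}" using \<open>?s e1 = ?s e3\<close> by auto
    hence "card {e1,e3} \<le> card {e \<in> set [e1,e2,e3]. induced c e = ?s e1}"
      by (intro card_mono) simp_all
    moreover have "card {e1,e3} = 2" using ne13 by simp
    ultimately show ?thesis unfolding ecount_def by simp
  qed
  ultimately show False using ec[rule_format, of "?s e1" b] by linarith
qed

end
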